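(* Let $G$ be a commutative group, $f$ a bijection of $G$, and $Q=G(f)=(G\cup\overline{G},* )$. Then: (i) $Q$ is commutative. (ii) For all $x,y\in G$: $x\backslash y=x^{-1}y$, $x\backslash\overline{y}=\overline{x^{-1}y}$, $\overline{x}\backslash y=\overline{x^{-1}f^{-1}(y)}$, $\overline{x}\backslash\overline{y}=x^{-1}y$. (iii) $G\le N_\mu(Q)$. (iv) $Q$ is a group if and only if $f$ is a translation of $G$, i.e., there is $c\in G$ with $f(x)=xc$ for all $x\in G$. (v) $N_\lambda(Q)\cap G=N_\rho(Q)\cap G=Z(Q)\cap G=\{x\in G:\ f(xy)=xf(y)\text{ for every }y\in G\}$. If $Q$ is not a group (so that $G=N_\mu(Q)$), then $N_\lambda(Q)=N_\rho(Q)=Z(Q)\le G$.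
   Context: A loop is a set with a binary operation and a neutral element $1$ in which all left translations $L_x:y\mapsto xy$ and right translations $R_x:y\mapsto yx$ are bijections; $x\backslash y$ denotes the unique $z$ with $xz=y$. For a loop $Q$: the left nucleus is $N_\lambda(Q)=\{x:(xy)z=x(yz)\ \forall y,z\}$, the middle nucleus is $N_\mu(Q)=\{y:(xy)z=x(yz)\ \forall x,z\}$, the right nucleus is $N_\rho(Q)=\{z:(xy)z=x(yz)\ \forall x,y\}$, and the center $Z(Q)$ is the set of elements lying in all three nuclei and commuting with all elements. Construction $G(f)$: for a commutative group $G$ (written multiplicatively) and a bijection $f:G\to G$, let $\overline{G}=\{\overline{x}:x\in G\}$ be a disjoint copy of $G$, and let $G(f)$ be the set $G\cup\overline{G}$ with multiplication $*$ defined for $x,y\in G$ by $x*y=xy$, $x*\overline{y}=\overline{xy}$, $\overline{x}*y=\overline{xy}$, $\overline{x}*\overline{y}=f(xy)$. It is a loop with neutral element $1$. *)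

theory Defs
  imports "HOL-Algebra.Group"
begin

text \<open>The construction G(f): elements Inl x stand for x \<in> G, elements Inr x for the
  copy \<open>overline x\<close>.\<close>

fun Gf_mult :: "('a, 'b) monoid_scheme \<Rightarrow> ('a \<Rightarrow> 'a) \<Rightarrow> 'a + 'a \<Rightarrow> 'a + 'a \<Rightarrow> 'a + 'a" where
  "Gf_mult G f (Inl x) (Inl y) = Inl (x \<otimes>\<^bsub>G\<^esub> y)"
| "Gf_mult G f (Inl x) (Inr y) = Inr (x \<otimes>\<^bsub>G\<^esub> y)"
| "Gf_mult G f (Inr x) (Inl y) = Inr (x \<otimes>\<^bsub>G\<^esub> y)"
| "Gf_mult G f (Inr x) (Inr y) = Inl (f (x \<otimes>\<^bsub>G\<^esub> y))"

definition Gf :: "('a, 'b) monoid_scheme \<Rightarrow> ('a \<Rightarrow> 'a) \<Rightarrow> ('a + 'a) monoid" where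
  "Gf G f = \<lparr> carrier = carrier G <+> carrier G,
              mult = Gf_mult G f,
              one = Inl \<one>\<^bsub>G\<^esub> \<rparr>"

definition loop_ldiv :: "('c, 'd) monoid_scheme \<Rightarrow> 'c \<Rightarrow> 'c \<Rightarrow> 'c" where
  "loop_ldiv Q x y = (THE z. z \<in> carrier Q \<and> x \<otimes>\<^bsub>Q\<^esub> z = y)"

definition left_nucleus :: "('c, 'd) monoid_scheme \<Rightarrow> 'c set" where
  "left_nucleus Q = {x \<in> carrier Q. \<forall>y\<in>carrier Q. \<forall>z\<in>carrier Q.
      (x \<otimes>\<^bsub>Q\<^esub> y) \<otimes>\<^bsub>Q\<^esub> z = x \<otimes>\<^bsub>Q\<^esub> (y \<otimes>\<^bsub>Q\<^esub> z)}"

definition middle_nucleus :: "('c, 'd) monoid_scheme \<Rightarrow> 'c set" where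
  "middle_nucleus Q = {y \<in> carrier Q. \<forall>x\<in>carrier Q. \<forall>z\<in>carrier Q.
      (x \<otimes>\<^bsub>Q\<^esub> y) \<otimes>\<^bsub>Q\<^esub> z = x \<otimes>\<^bsub>Q\<^esub> (y \<otimes>\<^bsub>Q\<^esub> z)}"

definition right_nucleus :: "('c, 'd) monoid_scheme \<Rightarrow> 'c set" where
  "right_nucleus Q = {z \<in> carrier Q. \<forall>x\<in>carrier Q. \<forall>y\<in>carrier Q.
      (x \<otimes>\<^bsub>Q\<^esub> y) \<otimes>\<^bsub>Q\<^esub> z = x \<otimes>\<^bsub>Q\<^esub> (y \<otimes>\<^bsub>Q\<^esub> z)}"

definition loop_center :: "('c, 'd) monoid_scheme \<Rightarrow> 'c set" where
  "loop_center Q = {x \<in> left_nucleus Q \<inter> middle_nucleus Q \<inter> right_nucleus Q.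
      \<forall>y\<in>carrier Q. x \<otimes>\<^bsub>Q\<^esub> y = y \<otimes>\<^bsub>Q\<^esub> x}"

end

theory Submission
  imports Defs
begin


lemma ball_Plus: "(\<forall>z\<in>A <+> B. P z) \<longleftrightarrow> (\<forall>x\<in>A. P (Inl x)) \<and> (\<forall>x\<in>B. P (Inr x))"
  by auto

lemma Gf_simps: "carrier (Gf G f) = carrier G <+> carrier G" "mult (Gf G f) = Gf_mult G f"
  "one (Gf G f) = Inl \<one>\<^bsub>G\<^esub>"
  by (simp_all add: Gf_def)

context comm_group begin

definition transl where "transl f \<longleftrightarrow> (\<exists>c\<in>carrier G. \<forall>x\<in>carrier G. f x = x \<otimes> c)"

lemma left_Inl:
  assumes f: "f \<in> carrier G \<rightarrow> carrier G" and x: "x \<in> carrier G"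
  shows "Inl x \<in> left_nucleus (Gf G f) \<longleftrightarrow> (\<forall>y\<in>carrier G. f (x \<otimes> y) = x \<otimes> f y)"
proof
  assume h: "Inl x \<in> left_nucleus (Gf G f)"
  show "\<forall>y\<in>carrier G. f (x \<otimes> y) = x \<otimes> f y"
  proof
    fix y assume y: "y \<in> carrier G"
    from h have "\<forall>a\<in>carrier G <+> carrier G. \<forall>b\<in>carrier G <+> carrier G. Gf_mult G f (Gf_mult G f (Inl x) a) b = Gf_mult G f (Inl x) (Gf_mult G f a b)"
      by (simp add: left_nucleus_def Gf_simps)
    hence "Gf_mult G f (Gf_mult G f (Inl x) (Inr \<one>)) (Inr y) = Gf_mult G f (Inl x) (Gf_mult G f (Inr \<one>) (Inr y))"
      using y by blast
    then show "f (x \<otimes> y) = x \<otimes> f y" using x y by simp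
  qed
next
  assume h: "\<forall>y\<in>carrier G. f (x \<otimes> y) = x \<otimes> f y"
  show "Inl x \<in> left_nucleus (Gf G f)"
    using x h unfolding left_nucleus_def Gf_simps
    by (auto elim: PlusE simp: m_assoc)
qed

lemma right_Inl:
  assumes f: "f \<in> carrier G \<rightarrow> carrier G" and x: "x \<in> carrier G"
  shows "Inl x \<in> right_nucleus (Gf G f) \<longleftrightarrow> (\<forall>y\<in>carrier G. f (x \<otimes> y) = x \<otimes> f y)"
proof
  assume h: "Inl x \<in> right_nucleus (Gf G f)"
  show "\<forall>y\<in>carrier G. f (x \<otimes> y) = x \<otimes> f y"
  proof
    fix y assume y: "y \<in> carrier G"
    from h have "\<forall>a\<in>carrier G <+> carrier G. \<forall>b\<in>carrier G <+> carrier G. Gf_mult G f (Gf_mult G f a b) (Inl x) = Gf_mult G f a (Gf_mult G f b (Inl x))"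
      by (simp add: right_nucleus_def Gf_simps)
    hence "Gf_mult G f (Gf_mult G f (Inr \<one>) (Inr y)) (Inl x) = Gf_mult G f (Inr \<one>) (Gf_mult G f (Inr y) (Inl x))"
      using y by blast
    hence "f y \<otimes> x = f (y \<otimes> x)" using x y by simp
    moreover have "f y \<in> carrier G" using f y by auto
    ultimately show "f (x \<otimes> y) = x \<otimes> f y" using x y by (metis m_comm)
  qed
next
  assume h: "\<forall>y\<in>carrier G. f (x \<otimes> y) = x \<otimes> f y"
  show "Inl x \<in> right_nucleus (Gf G f)"
    using x h unfolding right_nucleus_def Gf_simps
    apply (auto elim: PlusE simp: m_assoc)
    subgoal for a b
    proof -
      assume a: "a \<in> carrier G" and b: "b \<in> carrier G"
      have "f (a \<otimes> (b \<otimes> x)) = f (x \<otimes> (a \<otimes> b))" using a b x by (metis m_assoc m_closed m_comm)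
      also have "\<dots> = x \<otimes> f (a \<otimes> b)" using h a b by simp
      also have "\<dots> = f (a \<otimes> b) \<otimes> x" proof -
        have "f (a \<otimes> b) \<in> carrier G" using f a b by auto
        then show ?thesis using x by (simp add: m_comm)
      qed
      finally show ?thesis by simp
    qed
    done
qed


lemma Gf_comm:
  assumes "a \<in> carrier G <+> carrier G" "b \<in> carrier G <+> carrier G"
  shows "Gf_mult G f a b = Gf_mult G f b a"
  using assms by (auto elim!: PlusE simp: m_comm)

lemma solve_l: "x \<in> carrier G \<Longrightarrow> w \<in> carrier G \<Longrightarrow> y \<in> carrier G \<Longrightarrow> x \<otimes> w = y \<longleftrightarrow> w = inv x \<otimes> y"
  by (metis inv_closed inv_solve_left m_comm)

lemma transl_helper:
  assumes u: "u \<in> carrier G" and f: "f \<in> carrier G \<rightarrow> carrier G"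
    and h: "\<forall>x\<in>carrier G. f (x \<otimes> u) = x \<otimes> f u"
  shows "transl f"
  unfolding transl_def
proof (intro bexI ballI)
  show "inv u \<otimes> f u \<in> carrier G" using u f by auto
  fix w assume w: "w \<in> carrier G"
  have "f w = f ((w \<otimes> inv u) \<otimes> u)" using w u by (simp add: m_assoc)
  also have "\<dots> = (w \<otimes> inv u) \<otimes> f u" using h w u by simp
  also have "\<dots> = w \<otimes> (inv u \<otimes> f u)" using w u f by (simp add: m_assoc Pi_iff)
  finally show "f w = w \<otimes> (inv u \<otimes> f u)" .
qed

lemma mid_Inl:
  assumes y: "y \<in> carrier G"
  shows "Inl y \<in> middle_nucleus (Gf G f)"
  using y unfolding middle_nucleus_def Gf_simps
  by (auto elim: PlusE simp: m_assoc)

lemma mid_Inr: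
  assumes f: "f \<in> carrier G \<rightarrow> carrier G" and h: "Inr u \<in> middle_nucleus (Gf G f)"
  shows "transl f"
proof -
  from h have "Inr u \<in> carrier G <+> carrier G" by (simp add: middle_nucleus_def Gf_simps)
  hence u: "u \<in> carrier G" by auto
  from h have A: "\<forall>a\<in>carrier G <+> carrier G. \<forall>b\<in>carrier G <+> carrier G. Gf_mult G f (Gf_mult G f a (Inr u)) b = Gf_mult G f a (Gf_mult G f (Inr u) b)"
    by (simp add: middle_nucleus_def Gf_simps)
  show ?thesis
  proof (rule transl_helper[OF u f], intro ballI)
    fix x assume x: "x \<in> carrier G"
    have "Gf_mult G f (Gf_mult G f (Inr x) (Inr u)) (Inr \<one>) = Gf_mult G f (Inr x) (Gf_mult G f (Inr u) (Inr \<one>))"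
      using A x by blast
    then show "f (x \<otimes> u) = x \<otimes> f u" using x u f by (simp add: Pi_iff)
  qed
qed

lemma left_Inr:
  assumes f: "f \<in> carrier G \<rightarrow> carrier G" and h: "Inr u \<in> left_nucleus (Gf G f)"
  shows "transl f"
proof -
  from h have "Inr u \<in> carrier G <+> carrier G" by (simp add: left_nucleus_def Gf_simps)
  hence u: "u \<in> carrier G" by auto
  from h have A: "\<forall>a\<in>carrier G <+> carrier G. \<forall>b\<in>carrier G <+> carrier G. Gf_mult G f (Gf_mult G f (Inr u) a) b = Gf_mult G f (Inr u) (Gf_mult G f a b)"
    by (simp add: left_nucleus_def Gf_simps)
  show ?thesis
  proof (rule transl_helper[OF u f], intro ballI)
    fix x assume x: "x \<in> carrier G"
    have "Gf_mult G f (Gf_mult G f (Inr u) (Inr \<one>)) (Inl x) = Gf_mult G f (Inr u) (Gf_mult G f (Inr \<one>) (Inl x))"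
      using A x by blast
    then have "f u \<otimes> x = f (u \<otimes> x)" using x u f by simp
    moreover have "f u \<in> carrier G" using f u by auto
    ultimately show "f (x \<otimes> u) = x \<otimes> f u" using x u by (simp add: m_comm)
  qed
qed

lemma right_Inr:
  assumes f: "f \<in> carrier G \<rightarrow> carrier G" and h: "Inr u \<in> right_nucleus (Gf G f)"
  shows "transl f"
proof -
  from h have "Inr u \<in> carrier G <+> carrier G" by (simp add: right_nucleus_def Gf_simps)
  hence u: "u \<in> carrier G" by auto
  from h have A: "\<forall>a\<in>carrier G <+> carrier G. \<forall>b\<in>carrier G <+> carrier G. Gf_mult G f (Gf_mult G f a b) (Inr u) = Gf_mult G f a (Gf_mult G f b (Inr u))"
    by (simp add: right_nucleus_def Gf_simps)
  show ?thesis
  proof (rule transl_helper[OF u f], intro ballI)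
    fix x assume x: "x \<in> carrier G"
    have "Gf_mult G f (Gf_mult G f (Inl x) (Inr \<one>)) (Inr u) = Gf_mult G f (Inl x) (Gf_mult G f (Inr \<one>) (Inr u))"
      using A x by blast
    then show "f (x \<otimes> u) = x \<otimes> f u" using x u f by simp
  qed
qed

lemma group_transl:
  assumes f: "f \<in> carrier G \<rightarrow> carrier G"
  shows "group (Gf G f) \<longleftrightarrow> transl f"
proof
  assume g: "group (Gf G f)"
  then interpret Q: group "Gf G f" .
  show "transl f" unfolding transl_def
  proof (intro bexI ballI)
    show "f \<one> \<in> carrier G" using f by auto
    fix x assume x: "x \<in> carrier G"
    have "(Inr \<one> \<otimes>\<^bsub>Gf G f\<^esub> Inr \<one>) \<otimes>\<^bsub>Gf G f\<^esub> Inr x = Inr \<one> \<otimes>\<^bsub>Gf G f\<^esub> (Inr \<one> \<otimes>\<^bsub>Gf G f\<^esub> Inr x)"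
      using x by (intro Q.m_assoc) (auto simp: Gf_simps)
    then have "f \<one> \<otimes> x = f x" using x f by (simp add: Gf_simps Pi_iff)
    moreover have "f \<one> \<in> carrier G" using f by auto
    ultimately show "f x = x \<otimes> f \<one>" using x by (simp add: m_comm)
  qed
next
  assume "transl f"
  then obtain c where c: "c \<in> carrier G" and hc: "\<forall>x\<in>carrier G. f x = x \<otimes> c"
    unfolding transl_def by blast
  show "group (Gf G f)"
  proof (rule groupI)
    fix a b assume "a \<in> carrier (Gf G f)" "b \<in> carrier (Gf G f)"
    then show "a \<otimes>\<^bsub>Gf G f\<^esub> b \<in> carrier (Gf G f)"
      using c hc by (auto elim: PlusE simp: Gf_simps)
  next
    show "\<one>\<^bsub>Gf G f\<^esub> \<in> carrier (Gf G f)" by (auto simp add: Gf_simps)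
  next
    fix a b d assume "a \<in> carrier (Gf G f)" "b \<in> carrier (Gf G f)" "d \<in> carrier (Gf G f)"
    then show "(a \<otimes>\<^bsub>Gf G f\<^esub> b) \<otimes>\<^bsub>Gf G f\<^esub> d = a \<otimes>\<^bsub>Gf G f\<^esub> (b \<otimes>\<^bsub>Gf G f\<^esub> d)"
      using c hc by (auto elim!: PlusE simp: Gf_simps m_ac)
  next
    fix a assume "a \<in> carrier (Gf G f)"
    then show "\<one>\<^bsub>Gf G f\<^esub> \<otimes>\<^bsub>Gf G f\<^esub> a = a"
      by (auto elim: PlusE simp: Gf_simps)
  next
    fix a assume "a \<in> carrier (Gf G f)"
    then consider x where "x \<in> carrier G" "a = Inl x" | x where "x \<in> carrier G" "a = Inr x"
      by (auto simp: Gf_simps)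
    then show "\<exists>b\<in>carrier (Gf G f). b \<otimes>\<^bsub>Gf G f\<^esub> a = \<one>\<^bsub>Gf G f\<^esub>"
    proof cases
      case 1
      then show ?thesis by (intro bexI[of _ "Inl (inv x)"]) (auto simp: Gf_simps)
    next
      case 2
      have xc: "x \<otimes> c \<in> carrier G" using 2 c by simp
      have "f (inv (x \<otimes> c) \<otimes> x) = inv (x \<otimes> c) \<otimes> x \<otimes> c"
        using hc 2 c by simp
      also have "\<dots> = inv (x \<otimes> c) \<otimes> (x \<otimes> c)" using 2 c by (simp add: m_assoc)
      also have "\<dots> = \<one>" using xc by simp
      finally have "f (inv (x \<otimes> c) \<otimes> x) = \<one>" .
      then show ?thesis using 2 c by (intro bexI[of _ "Inr (inv (x \<otimes> c))"]) (auto simp: Gf_simps)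
    qed
  qed
qed


lemma uniq: "x \<in> carrier G \<Longrightarrow> w \<in> carrier G \<Longrightarrow> y \<in> carrier G \<Longrightarrow> x \<otimes> w = y \<Longrightarrow> w = inv x \<otimes> y"
  using solve_l by blast

lemma ex_l: "x \<in> carrier G \<Longrightarrow> y \<in> carrier G \<Longrightarrow> x \<otimes> (inv x \<otimes> y) = y"
proof -
  assume a: "x \<in> carrier G" "y \<in> carrier G"
  have "x \<otimes> (inv x \<otimes> y) = (x \<otimes> inv x) \<otimes> y" using a by (intro m_assoc[symmetric]) auto
  then show ?thesis using a by simp
qed

lemma ldiv_eq:
  assumes "z \<in> carrier G <+> carrier G" "Gf_mult G f a z = b"
    "\<And>z'. z' \<in> carrier G <+> carrier G \<Longrightarrow> Gf_mult G f a z' = b \<Longrightarrow> z' = z"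
  shows "loop_ldiv (Gf G f) a b = z"
  unfolding loop_ldiv_def Gf_simps
  apply (rule the_equality)
  using assms by blast+

lemma ldiv_all:
  assumes bij: "bij_betw f (carrier G) (carrier G)" and x: "x \<in> carrier G" and y: "y \<in> carrier G"
  shows "loop_ldiv (Gf G f) (Inl x) (Inl y) = Inl (inv x \<otimes> y) \<and>
        loop_ldiv (Gf G f) (Inl x) (Inr y) = Inr (inv x \<otimes> y) \<and>
        loop_ldiv (Gf G f) (Inr x) (Inl y) = Inr (inv x \<otimes> inv_into (carrier G) f y) \<and>
        loop_ldiv (Gf G f) (Inr x) (Inr y) = Inl (inv x \<otimes> y)"
proof (intro conjI)
  show "loop_ldiv (Gf G f) (Inl x) (Inl y) = Inl (inv x \<otimes> y)"
  proof (rule ldiv_eq)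
    show "Inl (inv x \<otimes> y) \<in> carrier G <+> carrier G" using x y by auto
    show "Gf_mult G f (Inl x) (Inl (inv x \<otimes> y)) = Inl y" using x y ex_l by simp
    fix z' assume z': "z' \<in> carrier G <+> carrier G" "Gf_mult G f (Inl x) z' = Inl y"
    then obtain w where w: "w \<in> carrier G" "z' = Inl w" "x \<otimes> w = y" by (auto elim!: PlusE)
    then show "z' = Inl (inv x \<otimes> y)" using uniq x y by blast
  qed
  show "loop_ldiv (Gf G f) (Inl x) (Inr y) = Inr (inv x \<otimes> y)"
  proof (rule ldiv_eq)
    show "Inr (inv x \<otimes> y) \<in> carrier G <+> carrier G" using x y by auto
    show "Gf_mult G f (Inl x) (Inr (inv x \<otimes> y)) = Inr y" using x y ex_l by simp
    fix z' assume z': "z' \<in> carrier G <+> carrier G" "Gf_mult G f (Inl x) z' = Inr y"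
    then obtain w where w: "w \<in> carrier G" "z' = Inr w" "x \<otimes> w = y" by (auto elim!: PlusE)
    then show "z' = Inr (inv x \<otimes> y)" using uniq x y by blast
  qed
  show "loop_ldiv (Gf G f) (Inr x) (Inr y) = Inl (inv x \<otimes> y)"
  proof (rule ldiv_eq)
    show "Inl (inv x \<otimes> y) \<in> carrier G <+> carrier G" using x y by auto
    show "Gf_mult G f (Inr x) (Inl (inv x \<otimes> y)) = Inr y" using x y ex_l by simp
    fix z' assume z': "z' \<in> carrier G <+> carrier G" "Gf_mult G f (Inr x) z' = Inr y"
    then obtain w where w: "w \<in> carrier G" "z' = Inl w" "x \<otimes> w = y" by (auto elim!: PlusE)
    then show "z' = Inl (inv x \<otimes> y)" using uniq x y by blast
  qed
  have inj: "inj_on f (carrier G)" and im: "f ` carrier G = carrier G"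
    using bij by (auto simp: bij_betw_def)
  have gy: "inv_into (carrier G) f y \<in> carrier G" using y im by (metis inv_into_into)
  have fgy: "f (inv_into (carrier G) f y) = y" using y im by (metis f_inv_into_f)
  show "loop_ldiv (Gf G f) (Inr x) (Inl y) = Inr (inv x \<otimes> inv_into (carrier G) f y)"
  proof (rule ldiv_eq)
    show "Inr (inv x \<otimes> inv_into (carrier G) f y) \<in> carrier G <+> carrier G" using x gy by auto
    show "Gf_mult G f (Inr x) (Inr (inv x \<otimes> inv_into (carrier G) f y)) = Inl y"
      using x gy fgy by (simp add: m_assoc[symmetric])
    fix z' assume z': "z' \<in> carrier G <+> carrier G" "Gf_mult G f (Inr x) z' = Inl y"
    then obtain w where w: "w \<in> carrier G" "z' = Inr w" "f (x \<otimes> w) = y" by (auto elim!: PlusE)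
    then have "x \<otimes> w = inv_into (carrier G) f y" using inj x by (metis m_closed inv_into_f_f)
    then show "z' = Inr (inv x \<otimes> inv_into (carrier G) f y)" using w x gy uniq by blast
  qed
qed

lemma center_iff:
  assumes f: "f \<in> carrier G \<rightarrow> carrier G"
  shows "a \<in> loop_center (Gf G f) \<longleftrightarrow> a \<in> left_nucleus (Gf G f) \<and> a \<in> middle_nucleus (Gf G f) \<and> a \<in> right_nucleus (Gf G f)"
proof -
  have "a \<in> left_nucleus (Gf G f) \<Longrightarrow> a \<in> carrier G <+> carrier G"
    by (simp add: left_nucleus_def Gf_simps)
  then show ?thesis unfolding loop_center_def using Gf_comm by (auto simp: Gf_simps)
qed

end

theorem lemma2p1:
  fixes G :: "('a, 'b) monoid_scheme" and f :: "'a \<Rightarrow> 'a"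
  assumes "comm_group G"
    and "bij_betw f (carrier G) (carrier G)"
  defines "Q \<equiv> Gf G f"
  shows
    "(\<forall>a\<in>carrier Q. \<forall>b\<in>carrier Q. a \<otimes>\<^bsub>Q\<^esub> b = b \<otimes>\<^bsub>Q\<^esub> a) \<and>
    (\<forall>x\<in>carrier G. \<forall>y\<in>carrier G.
        loop_ldiv Q (Inl x) (Inl y) = Inl (inv\<^bsub>G\<^esub> x \<otimes>\<^bsub>G\<^esub> y) \<and>
        loop_ldiv Q (Inl x) (Inr y) = Inr (inv\<^bsub>G\<^esub> x \<otimes>\<^bsub>G\<^esub> y) \<and>
        loop_ldiv Q (Inr x) (Inl y) = Inr (inv\<^bsub>G\<^esub> x \<otimes>\<^bsub>G\<^esub> inv_into (carrier G) f y) \<and>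
        loop_ldiv Q (Inr x) (Inr y) = Inl (inv\<^bsub>G\<^esub> x \<otimes>\<^bsub>G\<^esub> y)) \<and>
    Inl ` carrier G \<subseteq> middle_nucleus Q \<and>
    (group Q \<longleftrightarrow> (\<exists>c\<in>carrier G. \<forall>x\<in>carrier G. f x = x \<otimes>\<^bsub>G\<^esub> c)) \<and>
    (left_nucleus Q \<inter> Inl ` carrier G = right_nucleus Q \<inter> Inl ` carrier G \<and>
     right_nucleus Q \<inter> Inl ` carrier G = loop_center Q \<inter> Inl ` carrier G \<and>
     loop_center Q \<inter> Inl ` carrier G =
       Inl ` {x \<in> carrier G. \<forall>y\<in>carrier G. f (x \<otimes>\<^bsub>G\<^esub> y) = x \<otimes>\<^bsub>G\<^esub> f y}) \<and>
    (\<not> group Q \<longrightarrow> middle_nucleus Q = Inl ` carrier G \<and>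
       left_nucleus Q = right_nucleus Q \<and> right_nucleus Q = loop_center Q \<and>
       loop_center Q \<subseteq> Inl ` carrier G)"
proof -
  interpret comm_group G by (rule assms(1))
  have f: "f \<in> carrier G \<rightarrow> carrier G" using assms(2) by (rule bij_betw_imp_funcset)
  let ?S = "{x \<in> carrier G. \<forall>y\<in>carrier G. f (x \<otimes>\<^bsub>G\<^esub> y) = x \<otimes>\<^bsub>G\<^esub> f y}"
  have P1: "\<forall>a\<in>carrier Q. \<forall>b\<in>carrier Q. a \<otimes>\<^bsub>Q\<^esub> b = b \<otimes>\<^bsub>Q\<^esub> a"
    unfolding Q_def Gf_simps using Gf_comm by blast
  have P2: "\<forall>x\<in>carrier G. \<forall>y\<in>carrier G.
        loop_ldiv Q (Inl x) (Inl y) = Inl (inv\<^bsub>G\<^esub> x \<otimes>\<^bsub>G\<^esub> y) \<and>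
        loop_ldiv Q (Inl x) (Inr y) = Inr (inv\<^bsub>G\<^esub> x \<otimes>\<^bsub>G\<^esub> y) \<and>
        loop_ldiv Q (Inr x) (Inl y) = Inr (inv\<^bsub>G\<^esub> x \<otimes>\<^bsub>G\<^esub> inv_into (carrier G) f y) \<and>
        loop_ldiv Q (Inr x) (Inr y) = Inl (inv\<^bsub>G\<^esub> x \<otimes>\<^bsub>G\<^esub> y)"
    unfolding Q_def using ldiv_all[OF assms(2)] by blast
  have P3: "Inl ` carrier G \<subseteq> middle_nucleus Q"
    unfolding Q_def using mid_Inl by blast
  have GT: "group Q \<longleftrightarrow> transl f" unfolding Q_def by (rule group_transl[OF f])
  have P4: "group Q \<longleftrightarrow> (\<exists>c\<in>carrier G. \<forall>x\<in>carrier G. f x = x \<otimes>\<^bsub>G\<^esub> c)"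
    using GT by (simp add: transl_def)
  have LS: "left_nucleus Q \<inter> Inl ` carrier G = Inl ` ?S"
    unfolding Q_def using left_Inl[OF f] by auto
  have RS: "right_nucleus Q \<inter> Inl ` carrier G = Inl ` ?S"
    unfolding Q_def using right_Inl[OF f] by auto
  have CS: "loop_center Q \<inter> Inl ` carrier G = left_nucleus Q \<inter> Inl ` carrier G"
  proof -
    have "a \<in> loop_center Q \<inter> Inl ` carrier G \<longleftrightarrow> a \<in> left_nucleus Q \<inter> Inl ` carrier G" for a
    proof
      assume "a \<in> loop_center Q \<inter> Inl ` carrier G" then show "a \<in> left_nucleus Q \<inter> Inl ` carrier G"
        unfolding Q_def using center_iff[OF f] by blast
    next
      assume a: "a \<in> left_nucleus Q \<inter> Inl ` carrier G"
      then have "a \<in> right_nucleus Q" using LS RS by blast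
      moreover have "a \<in> middle_nucleus Q" using a P3 by blast
      ultimately show "a \<in> loop_center Q \<inter> Inl ` carrier G"
        unfolding Q_def using a center_iff[OF f] unfolding Q_def by blast
    qed
    then show ?thesis by blast
  qed
  have P6: "\<not> group Q \<longrightarrow> middle_nucleus Q = Inl ` carrier G \<and>
       left_nucleus Q = right_nucleus Q \<and> right_nucleus Q = loop_center Q \<and>
       loop_center Q \<subseteq> Inl ` carrier G"
  proof
    assume ng: "\<not> group Q"
    then have nt: "\<not> transl f" using GT by simp
    have sub: "a \<in> carrier Q \<Longrightarrow> (\<exists>u. a = Inr u) \<or> a \<in> Inl ` carrier G" for a
      unfolding Q_def Gf_simps by auto
    have Lsub: "left_nucleus Q \<subseteq> Inl ` carrier G"
    proof
      fix a assume a: "a \<in> left_nucleus Q"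
      then have "a \<in> carrier Q" by (simp add: left_nucleus_def)
      then show "a \<in> Inl ` carrier G" using sub a nt left_Inr[OF f] unfolding Q_def by blast
    qed
    have Rsub: "right_nucleus Q \<subseteq> Inl ` carrier G"
    proof
      fix a assume a: "a \<in> right_nucleus Q"
      then have "a \<in> carrier Q" by (simp add: right_nucleus_def)
      then show "a \<in> Inl ` carrier G" using sub a nt right_Inr[OF f] unfolding Q_def by blast
    qed
    have Msub: "middle_nucleus Q \<subseteq> Inl ` carrier G"
    proof
      fix a assume a: "a \<in> middle_nucleus Q"
      then have "a \<in> carrier Q" by (simp add: middle_nucleus_def)
      then show "a \<in> Inl ` carrier G" using sub a nt mid_Inr[OF f] unfolding Q_def by blast
    qed
    have Csub: "loop_center Q \<subseteq> Inl ` carrier G"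
      using Lsub unfolding Q_def using center_iff[OF f] by blast
    have "left_nucleus Q = right_nucleus Q" using Lsub Rsub LS RS by blast
    moreover have "right_nucleus Q = loop_center Q" using Rsub Csub LS RS CS by blast
    ultimately show "middle_nucleus Q = Inl ` carrier G \<and>
       left_nucleus Q = right_nucleus Q \<and> right_nucleus Q = loop_center Q \<and>
       loop_center Q \<subseteq> Inl ` carrier G" using Msub P3 Csub by blast
  qed
  show ?thesis using P1 P2 P3 P4 LS RS CS P6 by simp
qed

end
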